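(* Let $P$ be a poset (regarded as a category) with a partial model structure $(\mathcal{W},\mathcal{U},\mathcal{V})$, and let $Q$ be a connected component of $\mathcal{W}$ that contains a maximal map $f\colon a\to b$ (i.e. there are no non-identity morphisms $z\to a$ or $b\to z$ in $Q$). Then $Q$ contains an object $c$ such that for every $x\in Q$ the product $c\times x$ and the coproduct $c\cup x$ exist in $P$ and lie in $Q$. Consequently $Q$ is contractible.
   Context: A homotopical category $(\mathcal{C},\mathcal{W})$ is a category $\mathcal{C}$ with a subcategory $\mathcal{W}$ containing all objects and satisfying 2-out-of-6: if $h\circ g$ and $g\circ f$ are in $\mathcal{W}$ then so are $f,g,h,h\circ g\circ f$. A partial model category is a homotopical category $(\mathcal{C},\mathcal{W})$ together with subcategories $\mathcal{U},\mathcal{V}\subseteq\mathcal{W}$ such that (i) pushouts of morphisms of $\mathcal{U}$ along arbitrary morphisms of $\mathcal{C}$ exist and lie in $\mathcal{U}$, and pullbacks of morphisms of $\mathcal{V}$ along arbitrary morphisms exist and lie in $\mathcal{V}$; (ii) the morphisms of $\mathcal{W}$ admit a functorial factorization as a morphism of $\mathcal{U}$ followed by a morphism of $\mathcal{V}$. A connected component is a maximal connected full subcategory (objects joined by zigzags). In a poset, $c\times x$ and $c\cup x$ are the greatest lower and least upper bounds. Contractible means the classifying space of the nerve is contractible. *)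

theory Defs
  imports "HOL-Analysis.Analysis"
begin

text \<open>The poset P is the type 'a with its order; morphisms of P are pairs (x,y) with x \<le> y.
  Subcategories of P are represented by their sets of morphisms.\<close>

definition subcat :: "('a::order \<times> 'a) set \<Rightarrow> bool" where
  "subcat S \<longleftrightarrow> (\<forall>(x,y)\<in>S. x \<le> y \<and> (x,x) \<in> S \<and> (y,y) \<in> S)
     \<and> (\<forall>x y z. (x,y) \<in> S \<longrightarrow> (y,z) \<in> S \<longrightarrow> (x,z) \<in> S)"

(* composable f : x -> y, g : y -> z, h : z -> w in P; g o f = (x,z), h o g = (y,w) *)
definition homotopical :: "('a::order \<times> 'a) set \<Rightarrow> bool" where
  "homotopical W \<longleftrightarrow> subcat W \<and> (\<forall>x. (x,x) \<in> W) \<and>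
     (\<forall>x y z w. x \<le> y \<longrightarrow> y \<le> z \<longrightarrow> z \<le> w \<longrightarrow> (x,z) \<in> W \<longrightarrow> (y,w) \<in> W \<longrightarrow>
        (x,y) \<in> W \<and> (y,z) \<in> W \<and> (z,w) \<in> W \<and> (x,w) \<in> W)"

definition is_lub :: "'a::order \<Rightarrow> 'a \<Rightarrow> 'a \<Rightarrow> bool" where
  "is_lub y z s \<longleftrightarrow> y \<le> s \<and> z \<le> s \<and> (\<forall>t. y \<le> t \<longrightarrow> z \<le> t \<longrightarrow> s \<le> t)"

definition is_glb :: "'a::order \<Rightarrow> 'a \<Rightarrow> 'a \<Rightarrow> bool" where
  "is_glb y z p \<longleftrightarrow> p \<le> y \<and> p \<le> z \<and> (\<forall>t. t \<le> y \<longrightarrow> t \<le> z \<longrightarrow> t \<le> p)"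

text \<open>In a poset the pushout of u : x \<rightarrow> y along g : x \<rightarrow> z is the join y \<union> z, with
  the pushed-out map z \<rightarrow> y \<union> z; dually for pullbacks.\<close>
definition partial_model :: "('a::order \<times> 'a) set \<Rightarrow> ('a \<times> 'a) set \<Rightarrow> ('a \<times> 'a) set \<Rightarrow> bool" where
  "partial_model W U V \<longleftrightarrow> homotopical W \<and> subcat U \<and> subcat V \<and> U \<subseteq> W \<and> V \<subseteq> W \<and>
     (\<forall>x y z. (x,y) \<in> U \<longrightarrow> x \<le> z \<longrightarrow> (\<exists>s. is_lub y z s \<and> (z,s) \<in> U)) \<and>
     (\<forall>x y z. (y,x) \<in> V \<longrightarrow> z \<le> x \<longrightarrow> (\<exists>p. is_glb y z p \<and> (p,z) \<in> V)) \<and>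
     (\<exists>m :: 'a \<Rightarrow> 'a \<Rightarrow> 'a.
        (\<forall>x y. (x,y) \<in> W \<longrightarrow> (x, m x y) \<in> U \<and> (m x y, y) \<in> V) \<and>
        (\<forall>x y x' y'. (x,y) \<in> W \<longrightarrow> (x',y') \<in> W \<longrightarrow> x \<le> x' \<longrightarrow> y \<le> y' \<longrightarrow> m x y \<le> m x' y'))"

definition component :: "('a \<times> 'a) set \<Rightarrow> 'a \<Rightarrow> 'a set" where
  "component W x = {y. (x,y) \<in> (W \<union> W\<inverse>)\<^sup>*}"

definition is_component :: "('a \<times> 'a) set \<Rightarrow> 'a set \<Rightarrow> bool" where
  "is_component W Q \<longleftrightarrow> (\<exists>x. Q = component W x)"

text \<open>Geometric realization of the nerve of the full subcategory of W on Q
  (the order complex: nondegenerate simplices are finite nonempty W-chains),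
  with the weak (coherent) topology.\<close>
definition wchain :: "('a \<times> 'a) set \<Rightarrow> 'a set \<Rightarrow> 'a set \<Rightarrow> bool" where
  "wchain W Q \<sigma> \<longleftrightarrow> finite \<sigma> \<and> \<sigma> \<noteq> {} \<and> \<sigma> \<subseteq> Q \<and>
     (\<forall>x\<in>\<sigma>. \<forall>y\<in>\<sigma>. (x,y) \<in> W \<or> (y,x) \<in> W)"

definition chain_simplex :: "'a set \<Rightarrow> ('a \<Rightarrow> real) set" where
  "chain_simplex \<sigma> = {\<phi>. (\<forall>z. 0 \<le> \<phi> z) \<and> (\<forall>z. z \<notin> \<sigma> \<longrightarrow> \<phi> z = 0) \<and> sum \<phi> \<sigma> = 1}"

definition realization_carrier :: "('a \<times> 'a) set \<Rightarrow> 'a set \<Rightarrow> ('a \<Rightarrow> real) set" where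
  "realization_carrier W Q = (\<Union>\<sigma>\<in>{\<sigma>. wchain W Q \<sigma>}. chain_simplex \<sigma>)"

definition nerve_realization :: "('a \<times> 'a) set \<Rightarrow> 'a set \<Rightarrow> ('a \<Rightarrow> real) topology" where
  "nerve_realization W Q = topology (\<lambda>S. S \<subseteq> realization_carrier W Q \<and>
     (\<forall>\<sigma>. wchain W Q \<sigma> \<longrightarrow>
        openin (subtopology (product_topology (\<lambda>_. euclideanreal) UNIV) (chain_simplex \<sigma>)) (S \<inter> chain_simplex \<sigma>)))"

end

theory Submission
  imports Defs
begin

lemma subcat_le: "subcat S \<Longrightarrow> (x,y) \<in> S \<Longrightarrow> x \<le> y"
  unfolding subcat_def by blast
lemma subcat_comp: "subcat S \<Longrightarrow> (x,y) \<in> S \<Longrightarrow> (y,z) \<in> S \<Longrightarrow> (x,z) \<in> S"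
  unfolding subcat_def by blast

locale pm =
  fixes W U V :: "('a::order \<times> 'a) set" and Q :: "'a set" and a b c :: 'a
  assumes PM: "partial_model W U V"
    and Qfwd: "\<And>y t. y \<in> Q \<Longrightarrow> (y,t) \<in> W \<Longrightarrow> t \<in> Q"
    and Qbwd: "\<And>y t. y \<in> Q \<Longrightarrow> (t,y) \<in> W \<Longrightarrow> t \<in> Q"
    and aQ: "a \<in> Q" and bQ: "b \<in> Q"
    and amin: "\<forall>z\<in>Q. (z,a) \<in> W \<longrightarrow> z = a"
    and bmax: "\<forall>z\<in>Q. (b,z) \<in> W \<longrightarrow> z = b"
    and acU: "(a,c) \<in> U" and cbV: "(c,b) \<in> V"
begin

lemmas X = PM[unfolded partial_model_def]
lemma hom: "homotopical W" using conjunct1[OF X] .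
lemma subU: "subcat U" using conjunct1[OF conjunct2[OF X]] .
lemma subV: "subcat V" using conjunct1[OF conjunct2[OF conjunct2[OF X]]] .
lemma UsW: "U \<subseteq> W" using conjunct1[OF conjunct2[OF conjunct2[OF conjunct2[OF X]]]] .
lemma VsW: "V \<subseteq> W" using conjunct1[OF conjunct2[OF conjunct2[OF conjunct2[OF conjunct2[OF X]]]]] .
lemma pushA: "\<forall>x y z. (x,y) \<in> U \<longrightarrow> x \<le> z \<longrightarrow> (\<exists>s. is_lub y z s \<and> (z,s) \<in> U)"
  using conjunct1[OF conjunct2[OF conjunct2[OF conjunct2[OF conjunct2[OF conjunct2[OF X]]]]]] .
lemma pullA: "\<forall>x y z. (y,x) \<in> V \<longrightarrow> z \<le> x \<longrightarrow> (\<exists>p. is_glb y z p \<and> (p,z) \<in> V)"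
  using conjunct1[OF conjunct2[OF conjunct2[OF conjunct2[OF conjunct2[OF conjunct2[OF conjunct2[OF X]]]]]]] .
lemma factA: "\<exists>m :: 'a \<Rightarrow> 'a \<Rightarrow> 'a.
        (\<forall>x y. (x,y) \<in> W \<longrightarrow> (x, m x y) \<in> U \<and> (m x y, y) \<in> V) \<and>
        (\<forall>x y x' y'. (x,y) \<in> W \<longrightarrow> (x',y') \<in> W \<longrightarrow> x \<le> x' \<longrightarrow> y \<le> y' \<longrightarrow> m x y \<le> m x' y')"
  using conjunct2[OF conjunct2[OF conjunct2[OF conjunct2[OF conjunct2[OF conjunct2[OF conjunct2[OF X]]]]]]] .
lemma subW: "subcat W" using hom unfolding homotopical_def by (rule conjunct1)
lemma UW: "(x,y) \<in> U \<Longrightarrow> (x,y) \<in> W" using UsW by blast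
lemma VW: "(x,y) \<in> V \<Longrightarrow> (x,y) \<in> W" using VsW by blast
lemma Wle: "(x,y) \<in> W \<Longrightarrow> x \<le> y" using subcat_le[OF subW] .
lemma Ule: "(x,y) \<in> U \<Longrightarrow> x \<le> y" using subcat_le[OF subU] .
lemma Vle: "(x,y) \<in> V \<Longrightarrow> x \<le> y" using subcat_le[OF subV] .
lemma Wc: "(x,y) \<in> W \<Longrightarrow> (y,z) \<in> W \<Longrightarrow> (x,z) \<in> W" using subcat_comp[OF subW] .
lemma Vc: "(x,y) \<in> V \<Longrightarrow> (y,z) \<in> V \<Longrightarrow> (x,z) \<in> V" using subcat_comp[OF subV] .
lemma Uc: "(x,y) \<in> U \<Longrightarrow> (y,z) \<in> U \<Longrightarrow> (x,z) \<in> U" using subcat_comp[OF subU] .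
lemma Wrefl: "(x,x) \<in> W" using hom unfolding homotopical_def by (elim conjE) (erule allE)
lemma six: "\<forall>x y z w. x \<le> y \<longrightarrow> y \<le> z \<longrightarrow> z \<le> w \<longrightarrow> (x,z) \<in> W \<longrightarrow> (y,w) \<in> W \<longrightarrow>
        (x,y) \<in> W \<and> (y,z) \<in> W \<and> (z,w) \<in> W \<and> (x,w) \<in> W"
  using hom unfolding homotopical_def by blast
lemma Wl: assumes "x \<le> y" "y \<le> z" "(x,y) \<in> W" "(x,z) \<in> W" shows "(y,z) \<in> W"
  using six[rule_format, of x x y z] assms by simp
lemma Wr: assumes "x \<le> y" "y \<le> z" "(y,z) \<in> W" "(x,z) \<in> W" shows "(x,y) \<in> W"
  using six[rule_format, of x y z z] assms by simp
lemma push: "(x,y) \<in> U \<Longrightarrow> x \<le> z \<Longrightarrow> \<exists>s. is_lub y z s \<and> (z,s) \<in> U"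
  using pushA by blast
lemma pull: "(y,x) \<in> V \<Longrightarrow> z \<le> x \<Longrightarrow> \<exists>p. is_glb y z p \<and> (p,z) \<in> V"
  using pullA by blast
lemma fact: "(x,y) \<in> W \<Longrightarrow> \<exists>k. (x,k) \<in> U \<and> (k,y) \<in> V"
  using factA by blast

lemma maxB: assumes "(u,v) \<in> U" "u \<le> b" shows "v \<le> b"
proof -
  obtain s where s: "is_lub v b s" "(b,s) \<in> U" using push[OF assms] by blast
  have "s \<in> Q" using Qfwd[OF bQ UW[OF s(2)]] .
  hence "s = b" using bmax UW[OF s(2)] by blast
  thus ?thesis using s(1) unfolding is_lub_def by blast
qed

lemma minA: assumes "(u,v) \<in> V" "a \<le> v" shows "a \<le> u"
proof -
  obtain p where p: "is_glb u a p" "(p,a) \<in> V" using pull[OF assms] by blast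
  have "p \<in> Q" using Qbwd[OF aQ VW[OF p(2)]] .
  hence "p = a" using amin VW[OF p(2)] by blast
  thus ?thesis using p(1) unfolding is_glb_def by blast
qed

definition Gc where "Gc y \<longleftrightarrow> (\<exists>p. is_glb c y p \<and> (p,y) \<in> V \<and> (p,c) \<in> W)"
definition Lc where "Lc y \<longleftrightarrow> (\<exists>s. is_lub c y s \<and> (y,s) \<in> U \<and> (c,s) \<in> W)"

lemma cb: "c \<le> b" using Vle[OF cbV] .
lemma ac: "a \<le> c" using Ule[OF acU] .

lemma Lc_Gc: assumes "Lc y" shows "Gc y"
proof -
  obtain s where s: "is_lub c y s" "(y,s) \<in> U" "(c,s) \<in> W" using assms unfolding Lc_def by blast
  obtain k where k: "(c,k) \<in> U" "(k,s) \<in> V" using fact[OF s(3)] by blast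
  have kb: "k \<le> b" using maxB[OF k(1) cb] .
  have ys: "y \<le> s" using s(1) unfolding is_lub_def by blast
  obtain g where g: "is_glb k y g" "(g,y) \<in> V" using pull[OF k(2) ys] by blast
  have gb: "g \<le> b" using g(1) kb unfolding is_glb_def by (blast intro: order_trans)
  obtain p where p: "is_glb c g p" "(p,g) \<in> V" using pull[OF cbV gb] by blast
  have ck: "c \<le> k" using Ule[OF k(1)] .
  have glb: "is_glb c y p" using p(1) g(1) ck unfolding is_glb_def by (meson order_trans)
  have py: "(p,y) \<in> V" using Vc[OF p(2) g(2)] .
  have ps: "(p,s) \<in> W" using Wc[OF VW[OF py] UW[OF s(2)]] .
  have "p \<le> c" using glb unfolding is_glb_def by blast
  moreover have "c \<le> s" using s(1) unfolding is_lub_def by blast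
  ultimately have "(p,c) \<in> W" using Wr s(3) ps by blast
  thus ?thesis unfolding Gc_def using glb py by blast
qed

lemma Gc_Lc: assumes "Gc y" shows "Lc y"
proof -
  obtain p where p: "is_glb c y p" "(p,y) \<in> V" "(p,c) \<in> W" using assms unfolding Gc_def by blast
  obtain k where k: "(p,k) \<in> U" "(k,c) \<in> V" using fact[OF p(3)] by blast
  have ak: "a \<le> k" using minA[OF k(2) ac] .
  have py: "p \<le> y" using p(1) unfolding is_glb_def by blast
  obtain h where h: "is_lub k y h" "(y,h) \<in> U" using push[OF k(1) py] by blast
  have ah: "a \<le> h" using h(1) ak unfolding is_lub_def by (blast intro: order_trans)
  obtain s where s: "is_lub c h s" "(h,s) \<in> U" using push[OF acU ah] by blast
  have kc: "k \<le> c" using Vle[OF k(2)] .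
  have lub: "is_lub c y s" using s(1) h(1) kc unfolding is_lub_def by (meson order_trans)
  have ys: "(y,s) \<in> U" using Uc[OF h(2) s(2)] .
  have ps: "(p,s) \<in> W" using Wc[OF VW[OF p(2)] UW[OF ys]] .
  have "p \<le> c" using p(1) unfolding is_glb_def by blast
  moreover have "c \<le> s" using s(1) unfolding is_lub_def by blast
  ultimately have "(c,s) \<in> W" using Wl p(3) ps by blast
  thus ?thesis unfolding Lc_def using lub ys by blast
qed

lemma Gc_back: assumes "Gc y" "(z,y) \<in> W" shows "Gc z"
proof -
  obtain p where p: "is_glb c y p" "(p,y) \<in> V" "(p,c) \<in> W" using assms unfolding Gc_def by blast
  have zy: "z \<le> y" using Wle[OF assms(2)] .
  obtain q where q: "is_glb p z q" "(q,z) \<in> V" using pull[OF p(2) zy] by blast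
  have glb: "is_glb c z q" using p(1) q(1) zy unfolding is_glb_def by (meson order_trans)
  have qp: "q \<le> p" and pyl: "p \<le> y" using q(1) p(1) unfolding is_glb_def by blast+
  have "(q,y) \<in> W" using Wc[OF VW[OF q(2)] assms(2)] .
  hence "(q,p) \<in> W" using Wr[OF qp pyl VW[OF p(2)]] by blast
  hence "(q,c) \<in> W" using Wc p(3) by blast
  thus ?thesis unfolding Gc_def using glb q(2) by blast
qed

lemma Lc_fwd: assumes "Lc y" "(y,z) \<in> W" shows "Lc z"
proof -
  obtain s where s: "is_lub c y s" "(y,s) \<in> U" "(c,s) \<in> W" using assms unfolding Lc_def by blast
  have yz: "y \<le> z" using Wle[OF assms(2)] .
  have ys: "y \<le> s" using s(1) unfolding is_lub_def by blast
  obtain t where t: "is_lub s z t" "(z,t) \<in> U" using push[OF s(2) yz] by blast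
  have lub: "is_lub c z t" using s(1) t(1) yz unfolding is_lub_def by (meson order_trans)
  have st: "s \<le> t" using t(1) unfolding is_lub_def by blast
  have "(y,t) \<in> W" using Wc[OF assms(2) UW[OF t(2)]] .
  hence "(s,t) \<in> W" using Wl[OF ys st UW[OF s(2)]] by blast
  hence "(c,t) \<in> W" using Wc s(3) by blast
  thus ?thesis unfolding Lc_def using lub t(2) by blast
qed

lemma Good_c: "Gc c"
proof -
  have "is_glb c c c" unfolding is_glb_def by auto
  moreover have "(c,c) \<in> V" using subV cbV unfolding subcat_def by blast
  ultimately show ?thesis unfolding Gc_def using Wrefl[of c] by blast
qed

lemma Good_all: assumes "(c,y) \<in> (W \<union> W\<inverse>)\<^sup>*" shows "Gc y"
  using assms
proof (induction rule: rtrancl_induct)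
  case base then show ?case by (rule Good_c)
next
  case (step y z)
  then show ?case
  proof (cases "(y,z) \<in> W")
    case True
    show ?thesis by (rule Lc_Gc[OF Lc_fwd[OF Gc_Lc[OF step.IH] True]])
  next
    case False
    then have "(z,y) \<in> W" using step by blast
    then show ?thesis using Gc_back[OF step.IH] by blast
  qed
qed

end

abbreviation PT :: "('a \<Rightarrow> real) topology" where
  "PT \<equiv> product_topology (\<lambda>_. euclideanreal) UNIV"

abbreviation II :: "real topology" where "II \<equiv> top_of_set {0..1}"

lemma topspace_PT [simp]: "topspace PT = UNIV"
  by (simp add: topspace_product_topology)

definition OpN where
  "OpN W Q S \<longleftrightarrow> S \<subseteq> realization_carrier W Q \<and>
     (\<forall>\<sigma>. wchain W Q \<sigma> \<longrightarrow> openin (subtopology PT (chain_simplex \<sigma>)) (S \<inter> chain_simplex \<sigma>))"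

lemma istop_OpN: "istopology (OpN W Q)"
  unfolding istopology_def
proof (intro conjI allI impI)
  fix S T assume "OpN W Q S" "OpN W Q T"
  then show "OpN W Q (S \<inter> T)" unfolding OpN_def
  proof (intro conjI allI impI)
    fix \<sigma> assume a: "S \<subseteq> realization_carrier W Q \<and> (\<forall>\<sigma>. wchain W Q \<sigma> \<longrightarrow> openin (subtopology PT (chain_simplex \<sigma>)) (S \<inter> chain_simplex \<sigma>))"
      "T \<subseteq> realization_carrier W Q \<and> (\<forall>\<sigma>. wchain W Q \<sigma> \<longrightarrow> openin (subtopology PT (chain_simplex \<sigma>)) (T \<inter> chain_simplex \<sigma>))"
      "wchain W Q \<sigma>"
    have o1: "openin (subtopology PT (chain_simplex \<sigma>)) (S \<inter> chain_simplex \<sigma>)" using a by blast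
    have o2: "openin (subtopology PT (chain_simplex \<sigma>)) (T \<inter> chain_simplex \<sigma>)" using a by blast
    have "openin (subtopology PT (chain_simplex \<sigma>)) ((S \<inter> chain_simplex \<sigma>) \<inter> (T \<inter> chain_simplex \<sigma>))"
      using openin_Int[OF o1 o2] .
    moreover have "(S \<inter> chain_simplex \<sigma>) \<inter> (T \<inter> chain_simplex \<sigma>) = S \<inter> T \<inter> chain_simplex \<sigma>" by blast
    ultimately show "openin (subtopology PT (chain_simplex \<sigma>)) (S \<inter> T \<inter> chain_simplex \<sigma>)" by simp
  qed auto
next
  fix K assume K: "\<forall>S\<in>K. OpN W Q S"
  show "OpN W Q (\<Union>K)" unfolding OpN_def
  proof (intro conjI allI impI)
    show "\<Union>K \<subseteq> realization_carrier W Q" using K unfolding OpN_def by blast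
    fix \<sigma> assume "wchain W Q \<sigma>"
    then have "\<forall>S\<in>K. openin (subtopology PT (chain_simplex \<sigma>)) (S \<inter> chain_simplex \<sigma>)"
      using K unfolding OpN_def by blast
    then have "openin (subtopology PT (chain_simplex \<sigma>)) (\<Union>S\<in>K. S \<inter> chain_simplex \<sigma>)"
      by (intro openin_Union) auto
    moreover have "(\<Union>S\<in>K. S \<inter> chain_simplex \<sigma>) = \<Union>K \<inter> chain_simplex \<sigma>" by blast
    ultimately show "openin (subtopology PT (chain_simplex \<sigma>)) (\<Union>K \<inter> chain_simplex \<sigma>)" by simp
  qed
qed

lemma openin_NR: "openin (nerve_realization W Q) S \<longleftrightarrow> OpN W Q S"
proof -
  have "nerve_realization W Q = topology (OpN W Q)"
    by (simp add: nerve_realization_def OpN_def[abs_def])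
  then show ?thesis using topology_inverse'[OF istop_OpN, of W Q] by simp
qed

lemma simplex_sub: "wchain W Q \<sigma> \<Longrightarrow> chain_simplex \<sigma> \<subseteq> realization_carrier W Q"
  unfolding realization_carrier_def by blast

lemma OpN_K: "OpN W Q (realization_carrier W Q)"
  unfolding OpN_def
proof (intro conjI allI impI)
  fix \<sigma> assume s: "wchain W Q \<sigma>"
  have e: "realization_carrier W Q \<inter> chain_simplex \<sigma> = topspace (subtopology PT (chain_simplex \<sigma>))"
    using simplex_sub[OF s] by auto
  show "openin (subtopology PT (chain_simplex \<sigma>)) (realization_carrier W Q \<inter> chain_simplex \<sigma>)"
    unfolding e by (rule openin_topspace)
qed (rule order_refl)

lemma topspace_NR: "topspace (nerve_realization W Q) = realization_carrier W Q"
proof (rule antisym)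
  have "openin (nerve_realization W Q) (realization_carrier W Q)" using OpN_K openin_NR by blast
  then show "realization_carrier W Q \<subseteq> topspace (nerve_realization W Q)"
    by (rule openin_subset)
  have "openin (nerve_realization W Q) (topspace (nerve_realization W Q))" by (rule openin_topspace)
  then have "OpN W Q (topspace (nerve_realization W Q))" using openin_NR by blast
  then show "topspace (nerve_realization W Q) \<subseteq> realization_carrier W Q"
    unfolding OpN_def by (rule conjunct1)
qed

definition SY where "SY W Q = sum_topology (\<lambda>\<sigma>. subtopology PT (chain_simplex \<sigma>)) {\<sigma>. wchain W Q \<sigma>}"

lemma quot_SY: "quotient_map (SY W Q) (nerve_realization W Q) snd"
  unfolding quotient_map_def
proof (intro conjI allI impI)
  show "snd ` topspace (SY W Q) = topspace (nerve_realization W Q)"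
    unfolding SY_def topspace_NR realization_carrier_def by (force simp: o_def)
  fix S assume S: "S \<subseteq> topspace (nerve_realization W Q)"
  have e: "{x. (\<sigma>, x) \<in> {x \<in> topspace (SY W Q). snd x \<in> S}} = S \<inter> chain_simplex \<sigma>"
    if "wchain W Q \<sigma>" for \<sigma> using that unfolding SY_def by auto
  have sub: "{x \<in> topspace (SY W Q). snd x \<in> S} \<subseteq> Sigma {\<sigma>. wchain W Q \<sigma>} (topspace \<circ> (\<lambda>\<sigma>. subtopology PT (chain_simplex \<sigma>)))"
    unfolding SY_def by auto
  have "openin (SY W Q) {x \<in> topspace (SY W Q). snd x \<in> S} \<longleftrightarrow>
     (\<forall>\<sigma>\<in>{\<sigma>. wchain W Q \<sigma>}. openin (subtopology PT (chain_simplex \<sigma>)) {x. (\<sigma>, x) \<in> {x \<in> topspace (SY W Q). snd x \<in> S}})"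
    using sub by (subst (1) SY_def, subst openin_sum_topology) blast
  also have "\<dots> \<longleftrightarrow> (\<forall>\<sigma>. wchain W Q \<sigma> \<longrightarrow> openin (subtopology PT (chain_simplex \<sigma>)) (S \<inter> chain_simplex \<sigma>))"
    using e by auto
  also have "\<dots> \<longleftrightarrow> openin (nerve_realization W Q) S"
    unfolding openin_NR OpN_def using S topspace_NR[of W Q] by auto
  finally show "openin (SY W Q) {x \<in> topspace (SY W Q). snd x \<in> S} = openin (nerve_realization W Q) S" .
qed

lemma II_props: "locally_compact_space II" "Hausdorff_space II"
proof -
  have "compact_space II" by (simp add: compact_space_subtopology compactin_euclidean_iff)
  then show "locally_compact_space II" by (rule compact_imp_locally_compact_space)
  show "Hausdorff_space II" by (simp add: Hausdorff_space_subtopology)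
qed

lemma glue:
  assumes G: "G \<subseteq> {0..1} \<times> realization_carrier W Q"
    and loc: "\<And>\<sigma>. wchain W Q \<sigma> \<Longrightarrow>
       openin (prod_topology II (subtopology PT (chain_simplex \<sigma>))) {z \<in> G. snd z \<in> chain_simplex \<sigma>}"
  shows "openin (prod_topology II (nerve_realization W Q)) G"
proof -
  have q: "quotient_map (prod_topology II (SY W Q)) (prod_topology II (nerve_realization W Q))
              (\<lambda>(x,y). (x, snd y))"
    by (rule quotient_map_prod_right[OF II_props(1) disjI1[OF II_props(2)] quot_SY])
  have Gt: "G \<subseteq> topspace (prod_topology II (nerve_realization W Q))"
    using G by (simp add: topspace_NR)
  have "openin (prod_topology II (SY W Q))
      {x \<in> topspace (prod_topology II (SY W Q)). (\<lambda>(x,y). (x, snd y)) x \<in> G}"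
    unfolding openin_prod_topology_alt
  proof (intro allI impI)
    fix t y assume ty: "(t,y) \<in> {x \<in> topspace (prod_topology II (SY W Q)). (\<lambda>(x,y). (x, snd y)) x \<in> G}"
    obtain \<sigma> \<phi> where y: "y = (\<sigma>,\<phi>)" by fastforce
    have tt: "t \<in> topspace II" and yt: "y \<in> topspace (SY W Q)" and tG: "(t,\<phi>) \<in> G"
      using ty unfolding y by auto
    have s: "wchain W Q \<sigma>" and ph: "\<phi> \<in> chain_simplex \<sigma>"
      using yt unfolding y SY_def by auto
    have tin: "(t,\<phi>) \<in> {z \<in> G. snd z \<in> chain_simplex \<sigma>}" using tG ph by auto
    obtain U V where UV: "openin II U" "openin (subtopology PT (chain_simplex \<sigma>)) V" "t \<in> U" "\<phi> \<in> V"
       "U \<times> V \<subseteq> {z \<in> G. snd z \<in> chain_simplex \<sigma>}"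
      using loc[OF s, unfolded openin_prod_topology_alt, rule_format, OF tin] by blast
    have Vs: "V \<subseteq> chain_simplex \<sigma>" using openin_subset[OF UV(2)] by simp
    have Us: "U \<subseteq> {0..1}" using openin_subset[OF UV(1)] by simp
    have "openin (SY W Q) ({\<sigma>} \<times> V)"
      unfolding SY_def openin_sum_topology
    proof (intro conjI ballI)
      show "{\<sigma>} \<times> V \<subseteq> Sigma {\<sigma>. wchain W Q \<sigma>} (topspace \<circ> (\<lambda>\<sigma>. subtopology PT (chain_simplex \<sigma>)))"
        using Vs s by auto
      fix \<tau> assume "\<tau> \<in> {\<sigma>. wchain W Q \<sigma>}"
      show "openin (subtopology PT (chain_simplex \<tau>)) {x. (\<tau>, x) \<in> {\<sigma>} \<times> V}"
      proof (cases "\<tau> = \<sigma>")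
        case True
        have e: "{x. (\<tau>, x) \<in> {\<sigma>} \<times> V} = V" using True by blast
        show ?thesis unfolding e using UV(2) True by simp
      next
        case False
        have e: "{x. (\<tau>, x) \<in> {\<sigma>} \<times> V} = {}" using False by blast
        show ?thesis unfolding e by (rule openin_empty)
      qed
    qed
    moreover have "U \<times> ({\<sigma>} \<times> V) \<subseteq> {x \<in> topspace (prod_topology II (SY W Q)). (\<lambda>(x,y). (x, snd y)) x \<in> G}"
    proof (rule subsetI)
      fix z assume "z \<in> U \<times> ({\<sigma>} \<times> V)"
      then obtain t' \<phi>' where z: "z = (t', \<sigma>, \<phi>')" and a: "t' \<in> U" "\<phi>' \<in> V" by blast
      have "(t', \<phi>') \<in> G" using UV(5) a by blast
      moreover have "t' \<in> topspace II" using Us a by auto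
      moreover have "(\<sigma>, \<phi>') \<in> topspace (SY W Q)" using Vs a s unfolding SY_def by auto
      ultimately show "z \<in> {x \<in> topspace (prod_topology II (SY W Q)). (\<lambda>(x,y). (x, snd y)) x \<in> G}"
        unfolding z by simp
    qed
    ultimately show "\<exists>U V. openin II U \<and> openin (SY W Q) V \<and> t \<in> U \<and> y \<in> V \<and>
        U \<times> V \<subseteq> {x \<in> topspace (prod_topology II (SY W Q)). (\<lambda>(x,y). (x, snd y)) x \<in> G}"
      using UV(1,3,4) y by blast
  qed
  then show ?thesis using q[unfolded quotient_map_def, THEN conjunct2, rule_format, OF Gt] by blast
qed

definition Tm :: "('a::order \<Rightarrow> real) \<Rightarrow> 'a \<Rightarrow> real" where
  "Tm \<phi> x = (\<Sum>y\<in>{y. \<phi> y \<noteq> 0 \<and> y < x}. \<phi> y)"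
definition mv :: "real \<Rightarrow> ('a::order \<Rightarrow> real) \<Rightarrow> 'a \<Rightarrow> real" where
  "mv t \<phi> x = max 0 (min (\<phi> x) (t - Tm \<phi> x))"
definition HH :: "('a::order \<Rightarrow> 'a) \<Rightarrow> ('a \<Rightarrow> 'a) \<Rightarrow> real \<Rightarrow> ('a \<Rightarrow> real) \<Rightarrow> ('a \<Rightarrow> real)" where
  "HH A B t \<phi> = (\<lambda>z. (\<Sum>x\<in>{x. \<phi> x \<noteq> 0 \<and> A x = z}. mv t \<phi> x) + (\<Sum>x\<in>{x. \<phi> x \<noteq> 0 \<and> B x = z}. \<phi> x - mv t \<phi> x))"

lemma cs_nonneg: "\<phi> \<in> chain_simplex \<sigma> \<Longrightarrow> 0 \<le> \<phi> z"
  unfolding chain_simplex_def by blast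
lemma cs_zero: "\<phi> \<in> chain_simplex \<sigma> \<Longrightarrow> z \<notin> \<sigma> \<Longrightarrow> \<phi> z = 0"
  unfolding chain_simplex_def by blast
lemma cs_sum: "\<phi> \<in> chain_simplex \<sigma> \<Longrightarrow> sum \<phi> \<sigma> = 1"
  unfolding chain_simplex_def by blast

lemma mv_zero: "\<phi> x = 0 \<Longrightarrow> mv t \<phi> x = 0"
  unfolding mv_def by simp
lemma mv_nonneg: "0 \<le> mv t \<phi> x"
  unfolding mv_def by simp
lemma mv_le: "0 \<le> \<phi> x \<Longrightarrow> mv t \<phi> x \<le> \<phi> x"
  unfolding mv_def by simp

lemma sum_supp:
  assumes "finite \<sigma>" "\<And>x. x \<notin> \<sigma> \<Longrightarrow> \<phi> x = 0" "\<And>x. \<phi> x = 0 \<Longrightarrow> g x = 0"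
  shows "(\<Sum>x\<in>{x. \<phi> x \<noteq> 0 \<and> P x}. g x) = (\<Sum>x\<in>{x\<in>\<sigma>. P x}. g x)"
proof (rule sum.mono_neutral_left)
  show "finite {x \<in> \<sigma>. P x}" using assms(1) by simp
  show "{x. \<phi> x \<noteq> 0 \<and> P x} \<subseteq> {x \<in> \<sigma>. P x}" using assms(2) by blast
  show "\<forall>i\<in>{x \<in> \<sigma>. P x} - {x. \<phi> x \<noteq> 0 \<and> P x}. g i = 0" using assms(3) by blast
qed

context
  fixes W :: "('a::order \<times> 'a) set" and Q :: "'a set" and \<sigma> :: "'a set" and \<phi> :: "'a \<Rightarrow> real"
  assumes s: "wchain W Q \<sigma>" and ph: "\<phi> \<in> chain_simplex \<sigma>"
begin

lemma fin: "finite \<sigma>" using s unfolding wchain_def by blast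

lemma Tm_s: "Tm \<phi> x = (\<Sum>y\<in>{y\<in>\<sigma>. y < x}. \<phi> y)"
  unfolding Tm_def by (rule sum_supp[OF fin]) (use cs_zero[OF ph] in auto)

lemma Tm_nonneg: "0 \<le> Tm \<phi> x"
  unfolding Tm_s by (rule sum_nonneg) (use cs_nonneg[OF ph] in auto)

lemma HH_s: "HH A B t \<phi> z = (\<Sum>x\<in>{x\<in>\<sigma>. A x = z}. mv t \<phi> x) + (\<Sum>x\<in>{x\<in>\<sigma>. B x = z}. \<phi> x - mv t \<phi> x)"
proof -
  have "(\<Sum>x\<in>{x. \<phi> x \<noteq> 0 \<and> A x = z}. mv t \<phi> x) = (\<Sum>x\<in>{x\<in>\<sigma>. A x = z}. mv t \<phi> x)"
    by (rule sum_supp[OF fin]) (use cs_zero[OF ph] mv_zero in auto)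
  moreover have "(\<Sum>x\<in>{x. \<phi> x \<noteq> 0 \<and> B x = z}. \<phi> x - mv t \<phi> x) = (\<Sum>x\<in>{x\<in>\<sigma>. B x = z}. \<phi> x - mv t \<phi> x)"
    by (rule sum_supp[OF fin]) (use cs_zero[OF ph] mv_zero in auto)
  ultimately show ?thesis unfolding HH_def by simp
qed

lemma Tm_step:
  assumes "x2 \<in> \<sigma>" "x2 < x1"
  shows "Tm \<phi> x2 + \<phi> x2 \<le> Tm \<phi> x1"
proof -
  have "Tm \<phi> x2 + \<phi> x2 = (\<Sum>y\<in>insert x2 {y\<in>\<sigma>. y < x2}. \<phi> y)"
    unfolding Tm_s using fin by (subst sum.insert) auto
  also have "\<dots> \<le> (\<Sum>y\<in>{y\<in>\<sigma>. y < x1}. \<phi> y)"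
    by (rule sum_mono2) (use fin assms cs_nonneg[OF ph] in \<open>auto intro: less_trans\<close>)
  finally show ?thesis unfolding Tm_s .
qed

lemma Tm_top: assumes "x \<in> \<sigma>" shows "Tm \<phi> x + \<phi> x \<le> 1"
proof -
  have "Tm \<phi> x + \<phi> x = (\<Sum>y\<in>insert x {y\<in>\<sigma>. y < x}. \<phi> y)"
    unfolding Tm_s using fin by (subst sum.insert) auto
  also have "\<dots> \<le> (\<Sum>y\<in>\<sigma>. \<phi> y)"
    by (rule sum_mono2) (use fin assms cs_nonneg[OF ph] in auto)
  finally show ?thesis using cs_sum[OF ph] by simp
qed

lemma mv0: "mv 0 \<phi> x = 0"
  unfolding mv_def using Tm_nonneg[of x] cs_nonneg[OF ph, of x] by simp

lemma mv1: "mv 1 \<phi> x = \<phi> x"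
proof (cases "x \<in> \<sigma>")
  case True then show ?thesis unfolding mv_def using Tm_top[OF True] cs_nonneg[OF ph, of x] by simp
next
  case False then have "\<phi> x = 0" using cs_zero[OF ph] by simp
  then show ?thesis using mv_zero[of \<phi> x] by simp
qed

lemma HH0: "HH A B 0 \<phi> z = (\<Sum>x\<in>{x. \<phi> x \<noteq> 0 \<and> B x = z}. \<phi> x)"
  unfolding HH_def mv0 by simp

lemma HH1: "HH A B 1 \<phi> z = (\<Sum>x\<in>{x. \<phi> x \<noteq> 0 \<and> A x = z}. \<phi> x)"
  unfolding HH_def mv1 by simp

lemma HH_nonneg: "0 \<le> HH A B t \<phi> z"
  unfolding HH_s using mv_nonneg mv_le[of \<phi>, OF cs_nonneg[OF ph]]
  by (intro add_nonneg_nonneg sum_nonneg) auto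

lemma HH_sum:
  assumes "finite Z" "A ` \<sigma> \<subseteq> Z" "B ` \<sigma> \<subseteq> Z"
  shows "(\<Sum>z\<in>Z. HH A B t \<phi> z) = 1"
proof -
  have "(\<Sum>z\<in>Z. HH A B t \<phi> z) = (\<Sum>z\<in>Z. \<Sum>x\<in>{x\<in>\<sigma>. A x = z}. mv t \<phi> x) + (\<Sum>z\<in>Z. \<Sum>x\<in>{x\<in>\<sigma>. B x = z}. \<phi> x - mv t \<phi> x)"
    unfolding HH_s by (simp add: sum.distrib)
  also have "\<dots> = (\<Sum>x\<in>\<sigma>. mv t \<phi> x) + (\<Sum>x\<in>\<sigma>. \<phi> x - mv t \<phi> x)"
    using sum.group[OF fin assms(1) assms(2), of "mv t \<phi>"] sum.group[OF fin assms(1) assms(3), of "\<lambda>x. \<phi> x - mv t \<phi> x"]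
    by simp
  also have "\<dots> = 1" using cs_sum[OF ph] by (simp add: sum_subtractf)
  finally show ?thesis .
qed

end

lemma cont_ev: "continuous_map (prod_topology II (subtopology PT S)) euclideanreal (\<lambda>p. snd p x)"
proof -
  have "continuous_map (prod_topology II (subtopology PT S)) (subtopology PT S) snd" by (rule continuous_map_snd)
  moreover have "continuous_map (subtopology PT S) euclideanreal (\<lambda>\<phi>. \<phi> x)"
    by (rule continuous_map_from_subtopology[OF continuous_map_product_projection]) simp
  ultimately show ?thesis using continuous_map_compose by (fastforce simp: o_def)
qed

lemma cont_fst: "continuous_map (prod_topology II Y) euclideanreal fst"
  using continuous_map_fst[of II Y] by (rule continuous_map_into_fulltopology)

lemma closed_cs: assumes "finite \<tau>" shows "closedin PT (chain_simplex \<tau>)"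
proof -
  have e: "chain_simplex \<tau> = (\<Inter>z\<in>UNIV. {\<phi> \<in> topspace PT. \<phi> z \<in> (if z \<in> \<tau> then {0..} else {0})})
        \<inter> {\<phi> \<in> topspace PT. sum \<phi> \<tau> \<in> {1}}"
    unfolding chain_simplex_def by (auto split: if_splits) (metis order_refl)
  have c1: "closedin PT {\<phi> \<in> topspace PT. \<phi> z \<in> (if z \<in> \<tau> then {0..} else {0})}" for z
  proof (rule closedin_continuous_map_preimage)
    show "continuous_map PT euclideanreal (\<lambda>\<phi>. \<phi> z)" by (rule continuous_map_product_projection) simp
    show "closedin euclideanreal (if z \<in> \<tau> then {0..} else {0::real})"
      by (simp add: closed_closedin[symmetric])
  qed
  have c2: "closedin PT {\<phi> \<in> topspace PT. sum \<phi> \<tau> \<in> {1}}"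
  proof (rule closedin_continuous_map_preimage)
    show "continuous_map PT euclideanreal (\<lambda>\<phi>. sum \<phi> \<tau>)"
      by (intro continuous_map_sum assms continuous_map_product_projection) simp
    show "closedin euclideanreal {1::real}" by (simp add: closed_closedin[symmetric])
  qed
  show ?thesis unfolding e using c1 c2 by (intro closedin_Int closedin_INT) auto
qed

locale hl =
  fixes W :: "('a::order \<times> 'a) set" and Q :: "'a set" and A B :: "'a \<Rightarrow> 'a"
  assumes homW: "homotopical W"
    and AQ: "\<And>x. x \<in> Q \<Longrightarrow> A x \<in> Q" and BQ: "\<And>x. x \<in> Q \<Longrightarrow> B x \<in> Q"
    and AB: "\<And>x. x \<in> Q \<Longrightarrow> (A x, B x) \<in> W"
    and Am: "\<And>x y. x \<in> Q \<Longrightarrow> y \<in> Q \<Longrightarrow> (x,y) \<in> W \<Longrightarrow> (A x, A y) \<in> W"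
    and Bm: "\<And>x y. x \<in> Q \<Longrightarrow> y \<in> Q \<Longrightarrow> (x,y) \<in> W \<Longrightarrow> (B x, B y) \<in> W"
begin

lemma subW: "subcat W" using homW unfolding homotopical_def by (rule conjunct1)
lemma Wle: "(x,y) \<in> W \<Longrightarrow> x \<le> y" using subcat_le[OF subW] .
lemma Wc: "(x,y) \<in> W \<Longrightarrow> (y,z) \<in> W \<Longrightarrow> (x,z) \<in> W" using subcat_comp[OF subW] .
lemma Wrefl: "(x,x) \<in> W" using homW unfolding homotopical_def by (elim conjE) (erule allE)

definition KS where "KS \<sigma> = \<Union>(chain_simplex ` {\<tau>. \<tau> \<subseteq> A ` \<sigma> \<union> B ` \<sigma> \<and> wchain W Q \<tau>})"

context
  fixes \<sigma> :: "'a set" and \<phi> :: "'a \<Rightarrow> real" and t :: real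
  assumes s: "wchain W Q \<sigma>" and ph: "\<phi> \<in> chain_simplex \<sigma>"
begin

lemma sQ: "\<sigma> \<subseteq> Q" using s unfolding wchain_def by blast
lemma scomp: "x1 \<in> \<sigma> \<Longrightarrow> x2 \<in> \<sigma> \<Longrightarrow> (x1,x2) \<in> W \<or> (x2,x1) \<in> W"
  using s unfolding wchain_def by blast

lemma active:
  assumes "HH A B t \<phi> z \<noteq> 0"
  shows "\<exists>x\<in>\<sigma>. (A x = z \<and> mv t \<phi> x \<noteq> 0) \<or> (B x = z \<and> \<phi> x - mv t \<phi> x \<noteq> 0)"
proof (rule ccontr)
  assume n: "\<not> ?thesis"
  have "(\<Sum>x\<in>{x\<in>\<sigma>. A x = z}. mv t \<phi> x) = 0" using n by (intro sum.neutral) blast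
  moreover have "(\<Sum>x\<in>{x\<in>\<sigma>. B x = z}. \<phi> x - mv t \<phi> x) = 0" using n by (intro sum.neutral) blast
  ultimately show False using assms HH_s[OF s ph, of A B t z] by simp
qed

lemma pairAB:
  assumes x1: "x1 \<in> \<sigma>" and x2: "x2 \<in> \<sigma>" and m1: "mv t \<phi> x1 \<noteq> 0" and m2: "\<phi> x2 - mv t \<phi> x2 \<noteq> 0"
  shows "(A x1, B x2) \<in> W"
proof (cases "(x1,x2) \<in> W")
  case True
  then show ?thesis using Wc[OF Am[OF _ _ True] AB] sQ x1 x2 by blast
next
  case False
  then have w: "(x2,x1) \<in> W" using scomp[OF x1 x2] by blast
  have "x2 \<noteq> x1" using False Wrefl by blast
  then have lt: "x2 < x1" using Wle[OF w] by simp
  have st: "Tm \<phi> x2 + \<phi> x2 \<le> Tm \<phi> x1" by (rule Tm_step[OF s ph x2 lt])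
  have "0 < mv t \<phi> x1" using m1 mv_nonneg[of t \<phi> x1] by linarith
  then have "0 < t - Tm \<phi> x1" unfolding mv_def by linarith
  then have "\<phi> x2 \<le> t - Tm \<phi> x2" using st by linarith
  then have "mv t \<phi> x2 = \<phi> x2" unfolding mv_def using cs_nonneg[OF ph, of x2] by simp
  then show ?thesis using m2 by simp
qed

definition tau where "tau = {z \<in> A ` \<sigma> \<union> B ` \<sigma>. HH A B t \<phi> z \<noteq> 0}"

lemma tau_sum: "sum (HH A B t \<phi>) tau = 1"
proof -
  have "sum (HH A B t \<phi>) tau = sum (HH A B t \<phi>) (A ` \<sigma> \<union> B ` \<sigma>)"
    by (rule sum.mono_neutral_left) (use fin[OF s ph] in \<open>auto simp: tau_def\<close>)
  also have "\<dots> = 1" by (rule HH_sum[OF s ph]) (use fin[OF s ph] in auto)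
  finally show ?thesis .
qed

lemma tau_cs: "HH A B t \<phi> \<in> chain_simplex tau"
  unfolding chain_simplex_def
proof (intro CollectI conjI allI impI)
  show "0 \<le> HH A B t \<phi> z" for z by (rule HH_nonneg[OF s ph])
  show "HH A B t \<phi> z = 0" if "z \<notin> tau" for z
  proof (cases "z \<in> A ` \<sigma> \<union> B ` \<sigma>")
    case True then show ?thesis using that unfolding tau_def by blast
  next
    case False
    then have e1: "{x\<in>\<sigma>. A x = z} = {}" and e2: "{x\<in>\<sigma>. B x = z} = {}" by auto
    show ?thesis by (subst HH_s[OF s ph], subst e1, subst e2) simp
  qed
  show "sum (HH A B t \<phi>) tau = 1" by (rule tau_sum)
qed

lemma tau_wchain: "wchain W Q tau"
  unfolding wchain_def
proof (intro conjI ballI)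
  show "finite tau" unfolding tau_def using fin[OF s ph] by simp
  show "tau \<noteq> {}" using tau_sum by auto
  show "tau \<subseteq> Q" unfolding tau_def using sQ AQ BQ by blast
  fix z1 z2 assume z1: "z1 \<in> tau" and z2: "z2 \<in> tau"
  obtain x1 where x1: "x1 \<in> \<sigma>" "(A x1 = z1 \<and> mv t \<phi> x1 \<noteq> 0) \<or> (B x1 = z1 \<and> \<phi> x1 - mv t \<phi> x1 \<noteq> 0)"
    using active z1 unfolding tau_def by blast
  obtain x2 where x2: "x2 \<in> \<sigma>" "(A x2 = z2 \<and> mv t \<phi> x2 \<noteq> 0) \<or> (B x2 = z2 \<and> \<phi> x2 - mv t \<phi> x2 \<noteq> 0)"
    using active z2 unfolding tau_def by blast
  have q1: "x1 \<in> Q" and q2: "x2 \<in> Q" using x1 x2 sQ by auto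
  show "(z1, z2) \<in> W \<or> (z2, z1) \<in> W"
    using x1(2) x2(2)
  proof (elim disjE conjE)
    assume "A x1 = z1" "A x2 = z2"
    then show ?thesis using scomp[OF x1(1) x2(1)] Am[OF q1 q2] Am[OF q2 q1] by blast
  next
    assume "B x1 = z1" "B x2 = z2"
    then show ?thesis using scomp[OF x1(1) x2(1)] Bm[OF q1 q2] Bm[OF q2 q1] by blast
  next
    assume "A x1 = z1" "mv t \<phi> x1 \<noteq> 0" "B x2 = z2" "\<phi> x2 - mv t \<phi> x2 \<noteq> 0"
    then show ?thesis using pairAB[OF x1(1) x2(1)] by blast
  next
    assume "B x1 = z1" "\<phi> x1 - mv t \<phi> x1 \<noteq> 0" "A x2 = z2" "mv t \<phi> x2 \<noteq> 0"
    then show ?thesis using pairAB[OF x2(1) x1(1)] by blast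
  qed
qed

lemma HH_KS: "HH A B t \<phi> \<in> KS \<sigma>"
proof -
  have "tau \<subseteq> A ` \<sigma> \<union> B ` \<sigma>" unfolding tau_def by blast
  then show ?thesis unfolding KS_def using tau_wchain tau_cs by blast
qed

end

lemma KS_sub: "KS \<sigma> \<subseteq> realization_carrier W Q"
  unfolding KS_def realization_carrier_def by blast

end

context hl
begin

lemma cont_HH:
  assumes s: "wchain W Q \<sigma>"
  shows "continuous_map (prod_topology II (subtopology PT (chain_simplex \<sigma>))) PT (\<lambda>p. HH A B (fst p) (snd p))"
  unfolding continuous_map_componentwise_UNIV
proof
  fix z
  let ?f = "\<lambda>p. (\<Sum>x\<in>{x\<in>\<sigma>. A x = z}. max 0 (min (snd p x) (fst p - (\<Sum>y\<in>{y\<in>\<sigma>. y < x}. snd p y))))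
     + (\<Sum>x\<in>{x\<in>\<sigma>. B x = z}. snd p x - max 0 (min (snd p x) (fst p - (\<Sum>y\<in>{y\<in>\<sigma>. y < x}. snd p y))))"
  have fs: "finite \<sigma>" using s unfolding wchain_def by blast
  have "continuous_map (prod_topology II (subtopology PT (chain_simplex \<sigma>))) euclideanreal ?f"
    by (intro continuous_intros cont_ev cont_fst) (auto simp: fs)
  then show "continuous_map (prod_topology II (subtopology PT (chain_simplex \<sigma>))) euclideanreal (\<lambda>p. HH A B (fst p) (snd p) z)"
  proof (rule continuous_map_eq)
    fix p assume "p \<in> topspace (prod_topology II (subtopology PT (chain_simplex \<sigma>)))"
    then have ph: "snd p \<in> chain_simplex \<sigma>" by (cases p) auto
    show "?f p = HH A B (fst p) (snd p) z"
      by (simp add: HH_s[OF s ph] mv_def Tm_s[OF s ph])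
  qed
qed

lemma KS_open:
  assumes s: "wchain W Q \<sigma>" and Ob: "openin (nerve_realization W Q) Ob"
  shows "openin (subtopology PT (KS \<sigma>)) (Ob \<inter> KS \<sigma>)"
proof -
  define F where "F = {\<tau>. \<tau> \<subseteq> A ` \<sigma> \<union> B ` \<sigma> \<and> wchain W Q \<tau>}"
  have fs: "finite \<sigma>" using s unfolding wchain_def by blast
  have fF: "finite F" unfolding F_def
    by (rule finite_subset[of _ "Pow (A ` \<sigma> \<union> B ` \<sigma>)"]) (use fs in auto)
  have cl: "closedin PT (chain_simplex \<tau> - Ob)" if "\<tau> \<in> F" for \<tau>
  proof -
    have w: "wchain W Q \<tau>" using that unfolding F_def by blast
    have fin\<tau>: "finite \<tau>" using w unfolding wchain_def by blast
    have op: "openin (subtopology PT (chain_simplex \<tau>)) (Ob \<inter> chain_simplex \<tau>)"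
      using Ob w unfolding openin_NR OpN_def by blast
    have "closedin (subtopology PT (chain_simplex \<tau>)) (topspace (subtopology PT (chain_simplex \<tau>)) - (Ob \<inter> chain_simplex \<tau>))"
      by (rule closedin_diff[OF closedin_topspace op])
    moreover have "topspace (subtopology PT (chain_simplex \<tau>)) - (Ob \<inter> chain_simplex \<tau>) = chain_simplex \<tau> - Ob"
      by auto
    ultimately have "closedin (subtopology PT (chain_simplex \<tau>)) (chain_simplex \<tau> - Ob)" by simp
    then obtain T where T: "closedin PT T" "chain_simplex \<tau> - Ob = T \<inter> chain_simplex \<tau>"
      unfolding closedin_subtopology by blast
    show ?thesis unfolding T(2) by (rule closedin_Int[OF T(1) closed_cs[OF fin\<tau>]])
  qed
  define C where "C = (\<Union>\<tau>\<in>F. chain_simplex \<tau> - Ob)"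
  have cC: "closedin PT C" unfolding C_def
    by (rule closedin_Union) (use fF cl in auto)
  have e: "Ob \<inter> KS \<sigma> = (topspace PT - C) \<inter> KS \<sigma>"
    unfolding C_def KS_def F_def by auto
  show ?thesis unfolding e openin_subtopology
    using openin_diff[OF openin_topspace cC] by blast
qed

lemma homotopy_HH:
  "homotopic_with (\<lambda>_. True) (nerve_realization W Q) (nerve_realization W Q) (HH A B 0) (HH A B 1)"
  unfolding homotopic_with_def
proof (intro exI conjI)
  let ?X = "nerve_realization W Q"
  let ?h = "\<lambda>p. HH A B (fst p) (snd p)"
  have img: "?h p \<in> realization_carrier W Q" if sp: "snd p \<in> realization_carrier W Q" for p
  proof -
    obtain \<sigma> where s: "wchain W Q \<sigma>" and ph: "snd p \<in> chain_simplex \<sigma>"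
      using sp unfolding realization_carrier_def by blast
    show ?thesis using HH_KS[OF s ph] KS_sub by blast
  qed
  show "continuous_map (prod_topology II ?X) ?X ?h"
    unfolding continuous_map
  proof (intro conjI allI impI)
    show "?h ` topspace (prod_topology II ?X) \<subseteq> topspace ?X"
      using img by (auto simp: topspace_NR)
    fix Ob assume Ob: "openin ?X Ob"
    show "openin (prod_topology II ?X) {x \<in> topspace (prod_topology II ?X). ?h x \<in> Ob}"
    proof (rule glue)
      show "{x \<in> topspace (prod_topology II ?X). ?h x \<in> Ob} \<subseteq> {0..1} \<times> realization_carrier W Q"
        by (auto simp: topspace_NR)
      fix \<sigma> assume s: "wchain W Q \<sigma>"
      have cs: "continuous_map (prod_topology II (subtopology PT (chain_simplex \<sigma>))) (subtopology PT (KS \<sigma>)) ?h"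
        unfolding continuous_map_in_subtopology
      proof
        show "continuous_map (prod_topology II (subtopology PT (chain_simplex \<sigma>))) PT ?h" by (rule cont_HH[OF s])
        show "?h \<in> topspace (prod_topology II (subtopology PT (chain_simplex \<sigma>))) \<rightarrow> KS \<sigma>"
          using HH_KS[OF s] by auto
      qed
      have "openin (prod_topology II (subtopology PT (chain_simplex \<sigma>)))
         {x \<in> topspace (prod_topology II (subtopology PT (chain_simplex \<sigma>))). ?h x \<in> Ob \<inter> KS \<sigma>}"
        by (rule openin_continuous_map_preimage[OF cs KS_open[OF s Ob]])
      moreover have "{z \<in> {x \<in> topspace (prod_topology II ?X). ?h x \<in> Ob}. snd z \<in> chain_simplex \<sigma>}
         = {x \<in> topspace (prod_topology II (subtopology PT (chain_simplex \<sigma>))). ?h x \<in> Ob \<inter> KS \<sigma>}"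
        using HH_KS[OF s] simplex_sub[OF s] by (auto simp: topspace_NR)
      ultimately show "openin (prod_topology II (subtopology PT (chain_simplex \<sigma>)))
          {z \<in> {x \<in> topspace (prod_topology II ?X). ?h x \<in> Ob}. snd z \<in> chain_simplex \<sigma>}" by simp
    qed
  qed
qed auto

end

lemma pm_factA:
  assumes "partial_model W U V"
  shows "\<exists>m :: 'a::order \<Rightarrow> 'a \<Rightarrow> 'a.
        (\<forall>x y. (x,y) \<in> W \<longrightarrow> (x, m x y) \<in> U \<and> (m x y, y) \<in> V) \<and>
        (\<forall>x y x' y'. (x,y) \<in> W \<longrightarrow> (x',y') \<in> W \<longrightarrow> x \<le> x' \<longrightarrow> y \<le> y' \<longrightarrow> m x y \<le> m x' y')"
  using conjunct2[OF conjunct2[OF conjunct2[OF conjunct2[OF conjunct2[OF conjunct2[OF conjunct2[OF assms[unfolded partial_model_def]]]]]]]] .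

theorem proposition7p8:
  fixes W U V :: "('a::order \<times> 'a) set" and Q :: "'a set" and a b :: 'a
  assumes "partial_model W U V"
    and "is_component W Q"
    and "a \<in> Q" and "b \<in> Q" and "(a,b) \<in> W"
    and "\<forall>z\<in>Q. (z,a) \<in> W \<longrightarrow> z = a"
    and "\<forall>z\<in>Q. (b,z) \<in> W \<longrightarrow> z = b"
  shows "(\<exists>c\<in>Q. \<forall>x\<in>Q. (\<exists>p. is_glb c x p \<and> p \<in> Q) \<and> (\<exists>s. is_lub c x s \<and> s \<in> Q))
         \<and> contractible_space (nerve_realization W Q)"
proof -
  obtain x0 where Qd: "Q = component W x0" using assms(2) unfolding is_component_def by blast
  define R where "R = W \<union> W\<inverse>"
  have Qfwd: "t \<in> Q" if "y \<in> Q" "(y,t) \<in> W" for y t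
  proof -
    have "(x0,y) \<in> R\<^sup>*" using that(1) unfolding Qd component_def R_def by blast
    moreover have "(y,t) \<in> R" using that(2) unfolding R_def by blast
    ultimately have "(x0,t) \<in> R\<^sup>*" by (rule rtrancl.rtrancl_into_rtrancl)
    then show ?thesis unfolding Qd component_def R_def by blast
  qed
  have Qbwd: "t \<in> Q" if "y \<in> Q" "(t,y) \<in> W" for y t
  proof -
    have "(x0,y) \<in> R\<^sup>*" using that(1) unfolding Qd component_def R_def by blast
    moreover have "(y,t) \<in> R" using that(2) unfolding R_def by blast
    ultimately have "(x0,t) \<in> R\<^sup>*" by (rule rtrancl.rtrancl_into_rtrancl)
    then show ?thesis unfolding Qd component_def R_def by blast
  qed
  obtain m :: "'a \<Rightarrow> 'a \<Rightarrow> 'a" where m0: "(\<forall>x y. (x,y) \<in> W \<longrightarrow> (x, m x y) \<in> U \<and> (m x y, y) \<in> V) \<and>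
        (\<forall>x y x' y'. (x,y) \<in> W \<longrightarrow> (x',y') \<in> W \<longrightarrow> x \<le> x' \<longrightarrow> y \<le> y' \<longrightarrow> m x y \<le> m x' y')"
    using pm_factA[OF assms(1)] by (rule exE)
  have m: "\<forall>x y. (x,y) \<in> W \<longrightarrow> (x, m x y) \<in> U \<and> (m x y, y) \<in> V" using m0 by (rule conjunct1)
  define c where "c = m a b"
  have acU: "(a,c) \<in> U" and cbV: "(c,b) \<in> V" using m[rule_format, OF assms(5)] unfolding c_def by auto
  interpret P: pm W U V Q a b c
    by (rule pm.intro[OF assms(1) Qfwd Qbwd assms(3) assms(4) assms(6) assms(7) acU cbV])
  have RR: "R\<inverse> = R" unfolding R_def by auto
  have reach: "(c,y) \<in> R\<^sup>*" if "y \<in> Q" for y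
  proof -
    have "(x0,y) \<in> R\<^sup>*" using that unfolding Qd component_def R_def by blast
    have "(x0,a) \<in> R\<^sup>*" using assms(3) unfolding Qd component_def R_def by blast
    then have "(a,x0) \<in> (R\<inverse>)\<^sup>*" by (rule rtrancl_converseI)
    then have "(a,x0) \<in> R\<^sup>*" unfolding RR .
    moreover have "(c,a) \<in> R" using P.UW[OF acU] unfolding R_def by blast
    ultimately have "(c,x0) \<in> R\<^sup>*" by (rule converse_rtrancl_into_rtrancl[rotated])
    then show ?thesis using \<open>(x0,y) \<in> R\<^sup>*\<close> by (rule rtrancl_trans)
  qed
  have G: "P.Gc y" if "y \<in> Q" for y using P.Good_all reach[OF that] unfolding R_def by blast
  have L: "P.Lc y" if "y \<in> Q" for y using P.Gc_Lc[OF G[OF that]] .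
  have cQ: "c \<in> Q" using Qfwd[OF assms(3) P.UW[OF acU]] .
  have part1: "\<exists>c\<in>Q. \<forall>x\<in>Q. (\<exists>p. is_glb c x p \<and> p \<in> Q) \<and> (\<exists>s. is_lub c x s \<and> s \<in> Q)"
  proof (intro bexI[OF _ cQ] ballI conjI)
    fix x assume x: "x \<in> Q"
    obtain p where p: "is_glb c x p" "(p,x) \<in> V" using G[OF x] unfolding P.Gc_def by blast
    show "\<exists>p. is_glb c x p \<and> p \<in> Q" using p Qbwd[OF x P.VW[OF p(2)]] by blast
    obtain s where s: "is_lub c x s" "(x,s) \<in> U" using L[OF x] unfolding P.Lc_def by blast
    show "\<exists>s. is_lub c x s \<and> s \<in> Q" using s Qfwd[OF x P.UW[OF s(2)]] by blast
  qed
  define F where "F x = (SOME p. is_glb c x p \<and> (p,x) \<in> V \<and> (p,c) \<in> W)" for x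
  have Fp: "is_glb c x (F x) \<and> (F x, x) \<in> V \<and> (F x, c) \<in> W" if "x \<in> Q" for x
    unfolding F_def by (rule someI_ex) (use G[OF that] in \<open>unfold P.Gc_def\<close>)
  have FQ: "F x \<in> Q" if "x \<in> Q" for x using Qbwd[OF that P.VW] Fp[OF that] by blast
  have Fm: "(F x, F y) \<in> W" if "x \<in> Q" "y \<in> Q" "(x,y) \<in> W" for x y
  proof -
    have gx: "is_glb c x (F x)" and gy: "is_glb c y (F y)" using Fp that by blast+
    have xy: "x \<le> y" using P.Wle[OF that(3)] .
    have le: "F x \<le> F y" using gx gy xy unfolding is_glb_def by (meson order_trans)
    have "(F x, y) \<in> W" using P.Wc[OF P.VW that(3)] Fp[OF that(1)] by blast
    moreover have "(F y, y) \<in> W" using P.VW Fp[OF that(2)] by blast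
    moreover have "F y \<le> y" using gy unfolding is_glb_def by blast
    ultimately show ?thesis using P.Wr le by blast
  qed
  interpret H1: hl W Q F id
    by unfold_locales (use P.hom FQ Fp P.VW Fm in auto)
  interpret H2: hl W Q F "\<lambda>_. c"
    by unfold_locales (use P.hom FQ Fp cQ Fm P.Wrefl in auto)
  let ?X = "nerve_realization W Q"
  define \<delta> where "\<delta> = (\<lambda>z::'a. if z = c then 1 else (0::real))"
  have e1: "id \<phi> = HH F id 0 \<phi>" if ph0: "\<phi> \<in> topspace ?X" for \<phi>
  proof -
    obtain \<sigma> where s: "wchain W Q \<sigma>" and ph: "\<phi> \<in> chain_simplex \<sigma>"
      using ph0 unfolding topspace_NR realization_carrier_def by blast
    show ?thesis
    proof
      fix z
      show "id \<phi> z = HH F id 0 \<phi> z"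
      proof (cases "\<phi> z = 0")
        case True
        then have "{x. \<phi> x \<noteq> 0 \<and> id x = z} = {}" by auto
        then show ?thesis unfolding HH0[OF s ph] using True by simp
      next
        case False
        then have "{x. \<phi> x \<noteq> 0 \<and> id x = z} = {z}" by auto
        then show ?thesis unfolding HH0[OF s ph] by simp
      qed
    qed
  qed
  have e2: "HH F id 1 \<phi> = HH F (\<lambda>_. c) 1 \<phi>" if ph0: "\<phi> \<in> topspace ?X" for \<phi>
  proof -
    obtain \<sigma> where s: "wchain W Q \<sigma>" and ph: "\<phi> \<in> chain_simplex \<sigma>"
      using ph0 unfolding topspace_NR realization_carrier_def by blast
    show ?thesis by (rule ext) (simp only: HH1[OF s ph])
  qed
  have e3: "\<delta> = HH F (\<lambda>_. c) 0 \<phi>" if ph0: "\<phi> \<in> topspace ?X" for \<phi>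
  proof -
    obtain \<sigma> where s: "wchain W Q \<sigma>" and ph: "\<phi> \<in> chain_simplex \<sigma>"
      using ph0 unfolding topspace_NR realization_carrier_def by blast
    show ?thesis
    proof
      fix z
      show "\<delta> z = HH F (\<lambda>_. c) 0 \<phi> z"
      proof (cases "z = c")
        case True
        have "(\<Sum>x\<in>{x. \<phi> x \<noteq> 0 \<and> True}. \<phi> x) = (\<Sum>x\<in>{x\<in>\<sigma>. True}. \<phi> x)"
          by (rule sum_supp[OF fin[OF s ph]]) (use cs_zero[OF ph] in auto)
        then show ?thesis unfolding HH0[OF s ph] \<delta>_def using True cs_sum[OF ph] by simp
      next
        case False
        then have "{x. \<phi> x \<noteq> 0 \<and> c = z} = {}" by auto
        then show ?thesis unfolding HH0[OF s ph] \<delta>_def using False by simp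
      qed
    qed
  qed
  have h1: "homotopic_with (\<lambda>x. True) ?X ?X id (HH F id 1)"
    by (rule homotopic_with_eq[OF H1.homotopy_HH]) (use e1 in auto)
  have h2: "homotopic_with (\<lambda>x. True) ?X ?X (HH F id 1) (\<lambda>x. \<delta>)"
    by (rule homotopic_with_eq[OF homotopic_with_symD[OF H2.homotopy_HH]]) (use e2 e3 in auto)
  have "contractible_space ?X"
    unfolding contractible_space_def using homotopic_with_trans[OF h1 h2] by blast
  then show ?thesis using part1 by blast
qed

end
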